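(* Let $T_1:[0,1]\to[0,1]$ be a piecewise smooth map and $\rho_1$ a noise kernel as in the context, and let $L_{T_1,\rho_1}=N_{\rho_1}L_{T_1}$ be the associated transfer operator. Suppose there is $i$ with $\|L_{T_1,\rho_1}^i|_V\|_{L^1\to L^1}<1$. Then there is a constant $C>0$ such that for every map $T_2:[0,1]\to[0,1]$ with $\|T_1-T_2\|_{L^\infty}<\infty$, $$\|f_1-f_2\|_{L^1}\le C\,\|T_1-T_2\|_{L^\infty}\cdot\|\rho_1\|_{BV},$$ where $f_1$ is the stationary measure of $L_{T_1,\rho_1}$ and $f_2$ is a stationary measure of $L_{T_2,\rho_1}=N_{\rho_1}L_{T_2}$.
   Context: $T_1$ is piecewise smooth: there is a finite partition of $[0,1]$ into intervals $P_i$ such that on each $P_i$, $T_1$ is monotonic and $C^2$ in the interior, and the limits of $T_1'$ at the endpoints of $P_i$ exist in $\mathbb R\cup\{\pm\infty\}$. The noise kernel $\rho_1$ is a function of bounded variation with support in $[-\xi/2,\xi/2]$ and integral $1$; $\|\rho_1\|_{BV}$ denotes its total variation. For a measurable map $T$, $L_T$ is the pushforward on signed measures, $(L_T\mu)(A)=\mu(T^{-1}A)$. With $\pi(x)=\min_{i\in\mathbb Z}|x-2i|$, $N_{\rho}f=\pi_*(\rho*\hat f)$, where $\hat f$ is $f$ extended by $0$ outside $[0,1]$ and $\pi_*$ is pushforward by $\pi$ (reflecting boundary convolution). $V=\{\nu\in L^1([0,1]):\int\nu=0\}$. A stationary measure is a probability measure (density) fixed by the operator. *)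

theory Defs
  imports "HOL-Analysis.Analysis" "HOL-Probability.Essential_Supremum"
begin

definition variation_set :: "(real \<Rightarrow> real) \<Rightarrow> real set" where
  "variation_set f = {(\<Sum>k<n. \<bar>f (x (Suc k)) - f (x k)\<bar>) | n x.
       (\<forall>k<n. x k < x (Suc k))}"

definition bounded_variation :: "(real \<Rightarrow> real) \<Rightarrow> bool" where
  "bounded_variation f \<longleftrightarrow> bdd_above (variation_set f)"

definition BV_norm :: "(real \<Rightarrow> real) \<Rightarrow> real" where
  "BV_norm f = Sup (variation_set f)"

definition noise_kernel :: "real \<Rightarrow> (real \<Rightarrow> real) \<Rightarrow> bool" where
  "noise_kernel \<xi> \<rho> \<longleftrightarrow> bounded_variation \<rho>
     \<and> (\<forall>x. \<bar>x\<bar> > \<xi> / 2 \<longrightarrow> \<rho> x = 0)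
     \<and> integrable lborel \<rho> \<and> integral\<^sup>L lborel \<rho> = 1"

definition piecewise_smooth :: "(real \<Rightarrow> real) \<Rightarrow> bool" where
  "piecewise_smooth T \<longleftrightarrow>
     (\<exists>\<P> :: real set set. finite \<P> \<and> disjoint \<P> \<and> \<Union>\<P> = {0..1} \<and>
        (\<forall>P\<in>\<P>. is_interval P \<and> P \<noteq> {} \<and>
           (mono_on P T \<or> monotone_on P (\<le>) (\<ge>) T) \<and>
           (\<exists>T' T''. (\<forall>x\<in>interior P. (T has_real_derivative T' x) (at x)
                                     \<and> (T' has_real_derivative T'' x) (at x))
                     \<and> continuous_on (interior P) T''
                     \<and> (\<exists>l::ereal. ((\<lambda>x. ereal (T' x)) \<longlongrightarrow> l) (at (Inf P) within interior P))
                     \<and> (\<exists>l::ereal. ((\<lambda>x. ereal (T' x)) \<longlongrightarrow> l) (at (Sup P) within interior P)))))"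

definition refl_pi :: "real \<Rightarrow> real" where
  "refl_pi x = Inf (range (\<lambda>i::int. \<bar>x - 2 * of_int i\<bar>))"

(* density of rho * (L_T (f dx)) : (rho * L_T f)(z) = int_0^1 rho(z - T x) f(x) dx *)
definition conv_push :: "(real \<Rightarrow> real) \<Rightarrow> (real \<Rightarrow> real) \<Rightarrow> (real \<Rightarrow> real) \<Rightarrow> real \<Rightarrow> real" where
  "conv_push T \<rho> f z = integral\<^sup>L (lebesgue_on {0..1}) (\<lambda>x. \<rho> (z - T x) * f x)"

(* density of the pushforward pi_* g : sum of g over the preimages of y under pi *)
definition pi_push :: "(real \<Rightarrow> real) \<Rightarrow> real \<Rightarrow> real" where
  "pi_push g y = infsum g {z. refl_pi z = y}"

(* transfer operator L_{T,rho} = N_rho L_T acting on densities on [0,1] *)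
definition transfer_op :: "(real \<Rightarrow> real) \<Rightarrow> (real \<Rightarrow> real) \<Rightarrow> (real \<Rightarrow> real) \<Rightarrow> real \<Rightarrow> real" where
  "transfer_op T \<rho> f = pi_push (conv_push T \<rho> f)"

definition L1_norm :: "(real \<Rightarrow> real) \<Rightarrow> real" where
  "L1_norm f = integral\<^sup>L (lebesgue_on {0..1}) (\<lambda>x. \<bar>f x\<bar>)"

definition Linf_dist :: "(real \<Rightarrow> real) \<Rightarrow> (real \<Rightarrow> real) \<Rightarrow> ereal" where
  "Linf_dist T1 T2 = esssup (lebesgue_on {0..1}) (\<lambda>x. ereal \<bar>T1 x - T2 x\<bar>)"

definition stationary_density :: "(real \<Rightarrow> real) \<Rightarrow> (real \<Rightarrow> real) \<Rightarrow> (real \<Rightarrow> real) \<Rightarrow> bool" where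
  "stationary_density T \<rho> f \<longleftrightarrow> integrable (lebesgue_on {0..1}) f
     \<and> (AE x in lebesgue_on {0..1}. f x \<ge> 0)
     \<and> integral\<^sup>L (lebesgue_on {0..1}) f = 1
     \<and> (AE y in lebesgue_on {0..1}. transfer_op T \<rho> f y = f y)"

definition contracting_on_V :: "((real \<Rightarrow> real) \<Rightarrow> (real \<Rightarrow> real)) \<Rightarrow> nat \<Rightarrow> bool" where
  "contracting_on_V L i \<longleftrightarrow> (\<exists>c<1. \<forall>\<nu>. integrable (lebesgue_on {0..1}) \<nu>
       \<and> integral\<^sup>L (lebesgue_on {0..1}) \<nu> = 0
       \<longrightarrow> L1_norm ((L ^^ i) \<nu>) \<le> c * L1_norm \<nu>)"

end

theory Submission
  imports Defs
begin



abbreviation "M01 \<equiv> lebesgue_on {0..(1::real)}"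

lemma M01_finite: "finite_measure M01"
  by (simp add: finite_measure_lebesgue_on)

lemma kernel_bound:
  fixes k :: "real \<Rightarrow> real \<Rightarrow> real" and g :: "real \<Rightarrow> real" and B :: real
  assumes km: "case_prod k \<in> borel_measurable (M01 \<Otimes>\<^sub>M lborel)"
    and gi: "integrable M01 g"
    and ki: "\<And>x. x \<in> {0..1} \<Longrightarrow> integrable lborel (k x)"
    and kb: "AE x in M01. (\<integral>z. \<bar>k x z\<bar> \<partial>lborel) \<le> B"
  shows "integrable lborel (\<lambda>z. \<integral>x. k x z * g x \<partial>M01)"
    and "(\<integral>z. \<bar>\<integral>x. k x z * g x \<partial>M01\<bar> \<partial>lborel) \<le> B * (\<integral>x. \<bar>g x\<bar> \<partial>M01)"
proof -
  interpret M: finite_measure M01 by (rule M01_finite)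
  interpret P: pair_sigma_finite M01 lborel ..
  have gm[measurable]: "g \<in> borel_measurable M01" using gi by auto
  note km[measurable]
  have wm: "(\<lambda>x. \<integral>z. \<bar>k x z\<bar> \<partial>lborel) \<in> borel_measurable M01"
    by measurable
  have int1: "integrable M01 (\<lambda>x. \<integral>z. norm (k x z * g x) \<partial>lborel)"
  proof (rule Bochner_Integration.integrable_bound[where f="\<lambda>x. B * g x"])
    show "integrable M01 (\<lambda>x. B * g x)" using gi by auto
    show "(\<lambda>x. \<integral>z. norm (k x z * g x) \<partial>lborel) \<in> borel_measurable M01"
      by measurable
    show "AE x in M01. norm (\<integral>z. norm (k x z * g x) \<partial>lborel) \<le> norm (B * g x)"
      using kb
    proof eventually_elim
      case (elim x)
      have "(\<integral>z. norm (k x z * g x) \<partial>lborel) = (\<integral>z. \<bar>k x z\<bar> \<partial>lborel) * \<bar>g x\<bar>"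
        by (simp add: abs_mult)
      moreover have "0 \<le> (\<integral>z. \<bar>k x z\<bar> \<partial>lborel)" by simp
      ultimately show ?case using elim
        by (simp add: abs_mult mult_right_mono)
    qed
  qed
  have int2: "AE x in M01. integrable lborel (\<lambda>z. k x z * g x)"
    using ki by (auto simp: space_restrict_space intro!: AE_I2)
  have pint: "integrable (M01 \<Otimes>\<^sub>M lborel) (\<lambda>(x,z). k x z * g x)"
    by (rule P.Fubini_integrable) (use int1 int2 in auto)
  show "integrable lborel (\<lambda>z. \<integral>x. k x z * g x \<partial>M01)"
    using P.integrable_snd[of "\<lambda>x z. k x z * g x"] pint by simp
  have pint': "integrable (M01 \<Otimes>\<^sub>M lborel) (\<lambda>(x,z). \<bar>k x z * g x\<bar>)"
    using integrable_abs[OF pint] by (simp add: case_prod_beta')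
  have "(\<integral>z. \<bar>\<integral>x. k x z * g x \<partial>M01\<bar> \<partial>lborel) \<le> (\<integral>z. (\<integral>x. \<bar>k x z * g x\<bar> \<partial>M01) \<partial>lborel)"
    apply (rule integral_mono)
    using P.integrable_snd[of "\<lambda>x z. k x z * g x"] pint apply simp
    using P.integrable_snd[of "\<lambda>x z. \<bar>k x z * g x\<bar>"] pint' apply simp
    by (rule integral_abs_bound)
  also have "\<dots> = (\<integral>x. (\<integral>z. \<bar>k x z * g x\<bar> \<partial>lborel) \<partial>M01)"
    using P.Fubini_integral[of "\<lambda>x z. \<bar>k x z * g x\<bar>"] pint' by simp
  also have "\<dots> \<le> (\<integral>x. B * \<bar>g x\<bar> \<partial>M01)"
  proof (rule integral_mono_AE)
    show "integrable M01 (\<lambda>x. \<integral>z. \<bar>k x z * g x\<bar> \<partial>lborel)" using int1 by simp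
    show "integrable M01 (\<lambda>x. B * \<bar>g x\<bar>)" using gi by auto
    show "AE x in M01. (\<integral>z. \<bar>k x z * g x\<bar> \<partial>lborel) \<le> B * \<bar>g x\<bar>"
      using kb
    proof eventually_elim
      case (elim x)
      have "(\<integral>z. \<bar>k x z * g x\<bar> \<partial>lborel) = (\<integral>z. \<bar>k x z\<bar> \<partial>lborel) * \<bar>g x\<bar>"
        by (simp add: abs_mult)
      then show ?case using elim by (simp add: mult_right_mono)
    qed
  qed
  also have "\<dots> = B * (\<integral>x. \<bar>g x\<bar> \<partial>M01)" by simp
  finally show "(\<integral>z. \<bar>\<integral>x. k x z * g x \<partial>M01\<bar> \<partial>lborel) \<le> B * (\<integral>x. \<bar>g x\<bar> \<partial>M01)" .
qed




lemma var_elem: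
  assumes "bounded_variation f" "\<And>k. k < n \<Longrightarrow> x k < x (Suc k)"
  shows "(\<Sum>k<n. \<bar>f (x (Suc k)) - f (x k)\<bar>) \<le> BV_norm f"
proof -
  have "(\<Sum>k<n. \<bar>f (x (Suc k)) - f (x k)\<bar>) \<in> variation_set f"
    unfolding variation_set_def using assms(2) by blast
  then show ?thesis using assms(1) unfolding bounded_variation_def BV_norm_def
    by (simp add: cSup_upper)
qed

lemma BV_nonneg: "bounded_variation f \<Longrightarrow> 0 \<le> BV_norm f"
  using var_elem[of f 0 "\<lambda>k. k"] by simp

lemma kernel_bounded:
  assumes "noise_kernel \<xi> \<rho>"
  shows "\<bar>\<rho> x\<bar> \<le> BV_norm \<rho>"
proof -
  let ?y = "\<bar>x\<bar> + \<bar>\<xi>\<bar> + 1"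
  have bv: "bounded_variation \<rho>" and z: "\<rho> ?y = 0" using assms unfolding noise_kernel_def by auto
  have "(\<Sum>k<1. \<bar>\<rho> ((\<lambda>k. if k = 0 then x else ?y) (Suc k)) - \<rho> ((\<lambda>k. if k = 0 then x else ?y) k)\<bar>) \<le> BV_norm \<rho>"
    by (rule var_elem[OF bv]) auto
  then show ?thesis using z by simp
qed

lemma lborel_shift: fixes f :: "real \<Rightarrow> real" shows "(\<integral>t. f (t + c) \<partial>lborel) = (\<integral>w. (f w :: real) \<partial>lborel)"
  using lborel_integral_real_affine[of 1 f c] by (simp add: add.commute)

lemma lborel_shift_integrable: "integrable lborel (f :: real \<Rightarrow> real) \<Longrightarrow> integrable lborel (\<lambda>t. f (t + c))"
  using lborel_integrable_real_affine[of f 1 c] by (simp add: add.commute)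

lemma split_intervals:
  fixes u :: "real \<Rightarrow> real"
  assumes ui: "integrable lborel u" and a: "a > 0"
  shows "(\<integral>w. indicator {c..<c + real n * a} w * u w \<partial>lborel)
      = (\<Sum>k<n. \<integral>t. indicator {0..<a} t * u (t + (c + real k * a)) \<partial>lborel)"
proof (induction n)
  case 0 then show ?case by simp
next
  case (Suc n)
  have an: "0 \<le> a * real n" using a by simp
  have ind: "\<And>w. indicator {c..<c + real (Suc n) * a} w * u w
     = indicator {c..<c + real n * a} w * u w + indicator {c + real n * a..<c + real n * a + a} w * u w"
    using a an apply (auto simp: indicator_def algebra_simps) using an by linarith+
  have i1: "integrable lborel (\<lambda>w. indicator {p..<q} w * u w)" for p q :: real
    using integrable_mult_indicator[of "{p..<q}" lborel u] ui by simp
  have "(\<integral>w. indicator {c..<c + real (Suc n) * a} w * u w \<partial>lborel)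
     = (\<integral>w. indicator {c..<c + real n * a} w * u w \<partial>lborel)
       + (\<integral>w. indicator {c + real n * a..<c + real n * a + a} w * u w \<partial>lborel)"
    unfolding ind by (rule Bochner_Integration.integral_add) (rule i1)+
  also have "(\<integral>w. indicator {c + real n * a..<c + real n * a + a} w * u w \<partial>lborel)
      = (\<integral>t. indicator {0..<a} t * u (t + (c + real n * a)) \<partial>lborel)"
    by (subst lborel_shift[symmetric, where c="c + real n * a"])
       (rule Bochner_Integration.integral_cong, auto simp: indicator_def)
  finally show ?case using Suc by simp
qed


lemma kernel_shift_pos:
  assumes nk: "noise_kernel \<xi> \<rho>" and a: "a > 0"
  shows "(\<integral>z. \<bar>\<rho> (z + a) - \<rho> z\<bar> \<partial>lborel) \<le> a * BV_norm \<rho>"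
proof -
  define V where "V = BV_norm \<rho>"
  have bv: "bounded_variation \<rho>" and supp: "\<And>x. \<bar>x\<bar> > \<xi> / 2 \<Longrightarrow> \<rho> x = 0"
    and ri: "integrable lborel \<rho>" using nk unfolding noise_kernel_def by auto
  define u where "u w = \<bar>\<rho> (w + a) - \<rho> w\<bar>" for w
  have ui: "integrable lborel u" unfolding u_def
    by (intro integrable_abs Bochner_Integration.integrable_diff lborel_shift_integrable ri)
  have ii: "\<And>s. integrable lborel (\<lambda>t. indicator {0..<a} t * u (t + s))"
    using integrable_mult_indicator[of "{0..<a}" lborel, OF _ lborel_shift_integrable[OF ui]] by simp
  obtain N :: nat where N: "real N * a > \<bar>\<xi>\<bar> + a"
    using a reals_Archimedean3 by blast
  define c where "c = - (real N * a)"
  have xi: "\<xi> / 2 \<le> \<bar>\<xi>\<bar>" by simp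
  have "(\<integral>w. u w \<partial>lborel) = (\<integral>w. indicator {c..<c + real (2*N) * a} w * u w \<partial>lborel)"
  proof (rule Bochner_Integration.integral_cong)
    fix w
    show "u w = indicator {c..<c + real (2 * N) * a} w * u w"
    proof (cases "w \<in> {c..<c + real (2 * N) * a}")
      case False
      then have "w < c \<or> w \<ge> c + real (2*N) * a" by auto
      then have "\<bar>w\<bar> > \<xi> / 2 \<and> \<bar>w + a\<bar> > \<xi> / 2"
        using N a xi unfolding c_def by (auto simp: algebra_simps)
      then show ?thesis using False supp unfolding u_def by simp
    qed simp
  qed simp
  also have "\<dots> = (\<Sum>k<2*N. \<integral>t. indicator {0..<a} t * u (t + (c + real k * a)) \<partial>lborel)"
    by (rule split_intervals[OF ui a])
  also have "\<dots> = (\<integral>t. (\<Sum>k<2*N. indicator {0..<a} t * u (t + (c + real k * a))) \<partial>lborel)"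
    by (rule Bochner_Integration.integral_sum[symmetric])
       (auto intro!: ii)
  also have "\<dots> \<le> (\<integral>t. indicator {0..<a} t * V \<partial>lborel)"
  proof (rule integral_mono)
    show "integrable lborel (\<lambda>t. \<Sum>k<2*N. indicator {0..<a} t * u (t + (c + real k * a)))"
      by (rule Bochner_Integration.integrable_sum) (rule ii)
    show "integrable lborel (\<lambda>t. indicator {0..<a} t * V)"
      using a by (intro integrable_mult_left integrable_real_indicator) (auto simp: emeasure_lborel_Ico)
    fix t
    have "(\<Sum>k<2*N. u (t + (c + real k * a))) \<le> V"
      unfolding u_def V_def
      using var_elem[OF bv, of "2*N" "\<lambda>k. t + (c + real k * a)"] a
      by (simp add: algebra_simps)
    then show "(\<Sum>k<2*N. indicator {0..<a} t * u (t + (c + real k * a))) \<le> indicator {0..<a} t * V"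
      by (simp add: sum_distrib_left[symmetric] indicator_def)
  qed
  also have "\<dots> = a * V"
    using a by simp
  finally show ?thesis unfolding u_def V_def .
qed


lemma kernel_shift:
  assumes nk: "noise_kernel \<xi> \<rho>"
  shows "(\<integral>z. \<bar>\<rho> (z + a) - \<rho> z\<bar> \<partial>lborel) \<le> \<bar>a\<bar> * BV_norm \<rho>"
proof -
  consider "a > 0" | "a = 0" | "a < 0" by linarith
  then show ?thesis
  proof cases
    case 1 then show ?thesis using kernel_shift_pos[OF nk] by simp
  next
    case 2 then show ?thesis by simp
  next
    case 3
    have "(\<integral>z. \<bar>\<rho> (z + a) - \<rho> z\<bar> \<partial>lborel) = (\<integral>w. \<bar>\<rho> (w + (-a) + a) - \<rho> (w + (-a))\<bar> \<partial>lborel)"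
      by (rule lborel_shift[symmetric])
    also have "\<dots> = (\<integral>w. \<bar>\<rho> (w + (-a)) - \<rho> w\<bar> \<partial>lborel)"
      by (simp add: abs_minus_commute)
    also have "\<dots> \<le> (-a) * BV_norm \<rho>"
      using kernel_shift_pos[OF nk, of "-a"] 3 by simp
    finally show ?thesis using 3 by simp
  qed
qed





lemma borel_M01: "g \<in> borel_measurable borel \<Longrightarrow> (g::real\<Rightarrow>real) \<in> borel_measurable M01"
  by (simp add: measurable_completion measurable_restrict_space1)

lemma L01:
  fixes g :: "real \<Rightarrow> real"
  assumes g[measurable]: "g \<in> borel_measurable borel"
  shows "integral\<^sup>L M01 g = (\<integral>y. indicator {0<..<1} y * g y \<partial>lborel)"
    and "integrable M01 g \<longleftrightarrow> integrable lborel (\<lambda>y. indicator {0<..<1} y * g y)"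
proof -
  have ae: "AE y in lborel. indicator {0..1} y * g y = indicator {0<..<1} y * g y"
    using AE_lborel_singleton[of 0] AE_lborel_singleton[of 1]
    by eventually_elim (auto simp: indicator_def)
  have "integral\<^sup>L M01 g = integral\<^sup>L lebesgue (\<lambda>y. indicator {0..1} y * g y)"
    by (simp add: integral_restrict_space)
  also have "\<dots> = (\<integral>y. indicator {0..1} y * g y \<partial>lborel)"
    by (rule integral_completion) measurable
  also have "\<dots> = (\<integral>y. indicator {0<..<1} y * g y \<partial>lborel)"
    by (rule integral_cong_AE) (use ae in auto)
  finally show "integral\<^sup>L M01 g = (\<integral>y. indicator {0<..<1} y * g y \<partial>lborel)" .
  have "integrable M01 g \<longleftrightarrow> integrable lebesgue (\<lambda>y. indicator {0..1} y * g y)"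
    by (simp add: integrable_restrict_space)
  also have "\<dots> \<longleftrightarrow> integrable lborel (\<lambda>y. indicator {0..1} y * g y)"
    by (rule integrable_completion) measurable
  also have "\<dots> \<longleftrightarrow> integrable lborel (\<lambda>y. indicator {0<..<1} y * g y)"
    by (rule integrable_cong_AE) (use ae in auto)
  finally show "integrable M01 g \<longleftrightarrow> integrable lborel (\<lambda>y. indicator {0<..<1} y * g y)" .
qed


lemma refl_pi_eq:
  fixes i :: int and r :: real
  assumes "0 \<le> r" "r < 2"
  shows "refl_pi (2 * of_int i + r) = min r (2 - r)"
  unfolding refl_pi_def
proof (rule cInf_eq_minimum)
  show "min r (2 - r) \<in> range (\<lambda>j::int. \<bar>2 * of_int i + r - 2 * of_int j\<bar>)"
  proof (cases "r \<le> 2 - r")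
    case True
    then have "min r (2 - r) = \<bar>2 * of_int i + r - 2 * of_int i\<bar>" using assms by simp
    then show ?thesis by blast
  next
    case False
    then have "min r (2 - r) = \<bar>2 * of_int i + r - 2 * of_int (i + 1)\<bar>" using assms by simp
    then show ?thesis by blast
  qed
next
  fix x assume "x \<in> range (\<lambda>j::int. \<bar>2 * of_int i + r - 2 * of_int j\<bar>)"
  then obtain j :: int where x: "x = \<bar>2 * of_int i + r - 2 * of_int j\<bar>" by auto
  show "min r (2 - r) \<le> x"
  proof (cases "j \<le> i")
    case True
    then have "real_of_int j \<le> of_int i" by simp
    then show ?thesis using x assms by simp
  next
    case False
    then have "real_of_int j \<ge> of_int i + 1" by simp
    then show ?thesis using x assms by simp
  qed
qed

lemma refl_pi_plus: "0 \<le> y \<Longrightarrow> y \<le> 1 \<Longrightarrow> refl_pi (2 * of_int i + y) = y"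
  using refl_pi_eq[of y i] by simp

lemma refl_pi_minus: "0 \<le> y \<Longrightarrow> y \<le> 1 \<Longrightarrow> refl_pi (2 * of_int i - y) = y"
proof (cases "y = 0")
  case True then show ?thesis using refl_pi_plus[of 0 i] by simp
next
  case False
  assume "0 \<le> y" "y \<le> 1"
  then have "refl_pi (2 * of_int (i - 1) + (2 - y)) = min (2 - y) (2 - (2 - y))"
    using False by (intro refl_pi_eq) auto
  moreover have "2 * real_of_int (i - 1) + (2 - y) = 2 * of_int i - y" by simp
  ultimately show ?thesis using \<open>y \<le> 1\<close> by simp
qed

lemma refl_pi_inv:
  assumes "refl_pi z = y"
  shows "\<exists>i::int. z = 2 * of_int i + y \<or> z = 2 * of_int i - y"
proof -
  define m where "m = \<lfloor>z / 2\<rfloor>"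
  define r where "r = z - 2 * of_int m"
  have r: "0 \<le> r" "r < 2" unfolding r_def m_def
    using floor_divide_lower[of 2 z] floor_divide_upper[of 2 z] by (auto simp: field_simps)
  have z: "z = 2 * of_int m + r" unfolding r_def by simp
  have "y = min r (2 - r)" using refl_pi_eq[OF r, of m] assms z by simp
  then have "z = 2 * of_int m + y \<or> z = 2 * of_int (m + 1) - y" using z by (auto simp: min_def)
  then show ?thesis by blast
qed


lemma pi_push_eq:
  fixes h :: "real \<Rightarrow> real"
  assumes supp: "\<And>z. \<bar>z\<bar> > R \<Longrightarrow> h z = 0" and N: "R + 1 \<le> 2 * real N"
    and y: "0 < y" "y < 1"
  shows "pi_push h y = (\<Sum>i\<in>{-int N..int N}. h (2 * of_int i + y) + h (2 * of_int i - y))"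
proof -
  define I where "I = {-int N..int N}"
  define A where "A = (\<lambda>i. 2 * real_of_int i + y) ` I"
  define B where "B = (\<lambda>i. 2 * real_of_int i - y) ` I"
  have fin: "finite (A \<union> B)" unfolding A_def B_def I_def by simp
  have sub: "A \<union> B \<subseteq> {z. refl_pi z = y}"
    unfolding A_def B_def using refl_pi_plus refl_pi_minus y by auto
  have "pi_push h y = infsum h (A \<union> B)"
    unfolding pi_push_def
  proof (rule infsum_cong_neutral)
    fix z assume z: "z \<in> {z. refl_pi z = y} - (A \<union> B)"
    then obtain i :: int where zi: "z = 2 * of_int i + y \<or> z = 2 * of_int i - y"
      using refl_pi_inv by blast
    have "i \<notin> I" using z zi unfolding A_def B_def by auto
    then have "i < - int N \<or> i > int N" unfolding I_def by auto
    then have "i \<le> - int N - 1 \<or> i \<ge> int N + 1" by linarith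
    then have "real_of_int i \<le> real_of_int (- int N - 1) \<or> real_of_int i \<ge> real_of_int (int N + 1)"
      by (simp only: of_int_le_iff)
    then have "real_of_int i \<le> - real N - 1 \<or> real_of_int i \<ge> real N + 1" by simp
    then have "\<bar>z\<bar> > R" using zi N y by auto
    then show "h z = 0" by (rule supp)
  qed (use sub in auto)
  also have "\<dots> = sum h (A \<union> B)" using fin by simp
  also have "\<dots> = sum h A + sum h B"
  proof (rule sum.union_disjoint)
    show "finite A" "finite B" unfolding A_def B_def I_def by auto
    show "A \<inter> B = {}"
    proof (rule ccontr)
      assume "A \<inter> B \<noteq> {}"
      then obtain i j :: int where "2 * real_of_int i + y = 2 * of_int j - y"
        unfolding A_def B_def by auto
      then have "y = of_int (j - i)" by simp
      then have "0 < real_of_int (j - i)" "real_of_int (j - i) < 1" using y by auto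
      then have "0 < j - i" "j - i < 1" by simp_all
      then show False by linarith
    qed
  qed
  also have "sum h A = (\<Sum>i\<in>I. h (2 * of_int i + y))"
    unfolding A_def by (rule sum.reindex_cong[where l="\<lambda>i. 2 * real_of_int i + y"]) (auto simp: inj_on_def)
  also have "sum h B = (\<Sum>i\<in>I. h (2 * of_int i - y))"
    unfolding B_def by (rule sum.reindex_cong[where l="\<lambda>i. 2 * real_of_int i - y"]) (auto simp: inj_on_def)
  finally show ?thesis unfolding I_def by (simp add: sum.distrib)
qed


lemma AE_M01_open: "AE y in M01. 0 < y \<and> y < 1"
proof -
  have "AE y in lborel. y \<noteq> 0 \<and> y \<noteq> 1"
    using AE_lborel_singleton[of 0] AE_lborel_singleton[of 1] by eventually_elim auto
  then have "AE y in lebesgue. y \<noteq> 0 \<and> y \<noteq> 1" by (rule AE_completion)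
  then show ?thesis
    by (subst AE_restrict_space_iff) (auto elim!: eventually_mono)
qed

lemma shift_ind_plus:
  fixes h :: "real \<Rightarrow> real"
  shows "(\<integral>y. indicator {0<..<1} y * \<bar>h (c + y)\<bar> \<partial>lborel) = (\<integral>w. indicator {c<..<c+1} w * \<bar>h w\<bar> \<partial>lborel)"
proof -
  have "(\<integral>w. indicator {c<..<c+1} w * \<bar>h w\<bar> \<partial>lborel) = (\<integral>y. indicator {c<..<c+1} (y + c) * \<bar>h (y + c)\<bar> \<partial>lborel)"
    by (rule lborel_shift[symmetric])
  also have "\<dots> = (\<integral>y. indicator {0<..<1} y * \<bar>h (c + y)\<bar> \<partial>lborel)"
    by (rule Bochner_Integration.integral_cong) (auto simp: indicator_def add.commute)
  finally show ?thesis by simp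
qed

lemma shift_ind_minus:
  fixes h :: "real \<Rightarrow> real"
  shows "(\<integral>y. indicator {0<..<1} y * \<bar>h (c - y)\<bar> \<partial>lborel) = (\<integral>w. indicator {c-1<..<c} w * \<bar>h w\<bar> \<partial>lborel)"
proof -
  have "(\<integral>w. indicator {c-1<..<c} w * \<bar>h w\<bar> \<partial>lborel) = \<bar>-1\<bar> *\<^sub>R (\<integral>y. indicator {c-1<..<c} (c + (-1) * y) * \<bar>h (c + (-1) * y)\<bar> \<partial>lborel)"
    by (rule lborel_integral_real_affine) simp
  also have "\<dots> = (\<integral>y. indicator {0<..<1} y * \<bar>h (c - y)\<bar> \<partial>lborel)"
    by (simp, rule Bochner_Integration.integral_cong) (auto simp: indicator_def)
  finally show ?thesis by simp
qed

lemma ind_sum_le: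
  fixes I :: "int set"
  assumes "finite I"
  shows "(\<Sum>i\<in>I. indicator {2 * real_of_int i<..<2 * real_of_int i + 1} w + indicator {2 * real_of_int i - 1<..<2 * real_of_int i} w) \<le> (1::real)"
proof -
  define i0 where "i0 = \<lfloor>(w + 1) / 2\<rfloor>"
  have le: "indicator {2 * real_of_int i<..<2 * real_of_int i + 1} w + indicator {2 * real_of_int i - 1<..<2 * real_of_int i} w
      \<le> (if i = i0 then 1 else (0::real))" for i
  proof (cases "w \<in> {2 * real_of_int i - 1<..<2 * real_of_int i + 1}")
    case True
    then have "i = i0" unfolding i0_def by (intro floor_unique[symmetric]) (auto simp: field_simps)
    then show ?thesis by (auto simp: indicator_def)
  next
    case False
    then show ?thesis by (auto simp: indicator_def)
  qed
  have "(\<Sum>i\<in>I. indicator {2 * real_of_int i<..<2 * real_of_int i + 1} w + indicator {2 * real_of_int i - 1<..<2 * real_of_int i} w)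
      \<le> (\<Sum>i\<in>I. if i = i0 then 1 else (0::real))"
    by (rule sum_mono) (rule le)
  also have "\<dots> \<le> 1" using assms by (simp add: sum.delta)
  finally show ?thesis .
qed


lemma pi_push_L1:
  fixes h :: "real \<Rightarrow> real"
  assumes hi: "integrable lborel h" and supp: "\<And>z. \<bar>z\<bar> > R \<Longrightarrow> h z = 0"
  shows "integrable M01 (pi_push h)" and "(\<integral>y. \<bar>pi_push h y\<bar> \<partial>M01) \<le> (\<integral>z. \<bar>h z\<bar> \<partial>lborel)"
proof -
  have hm[measurable]: "h \<in> borel_measurable borel" using hi by auto
  obtain N :: nat where N: "R + 1 \<le> 2 * real N"
    using real_arch_simple[of "(R + 1) / 2"] by (auto simp: field_simps)
  define I where "I = {-int N..int N}"
  have finI: "finite I" unfolding I_def by simp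
  define S where "S y = (\<Sum>i\<in>I. h (2 * of_int i + y) + h (2 * of_int i - y))" for y
  define S' where "S' y = (\<Sum>i\<in>I. \<bar>h (2 * of_int i + y)\<bar> + \<bar>h (2 * of_int i - y)\<bar>)" for y
  have Sm[measurable]: "S \<in> borel_measurable borel" unfolding S_def by measurable
  have S'm[measurable]: "S' \<in> borel_measurable borel" unfolding S'_def by measurable
  have eq: "\<And>y. 0 < y \<Longrightarrow> y < 1 \<Longrightarrow> pi_push h y = S y"
    unfolding S_def I_def by (rule pi_push_eq[OF supp N])
  have ae: "AE y in M01. pi_push h y = S y"
    using AE_M01_open by eventually_elim (use eq in auto)
  have pm: "pi_push h \<in> borel_measurable M01"
  proof -
    define c0 where "c0 = pi_push h 0 - S 0"
    define c1 where "c1 = pi_push h 1 - S 1"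
    have "(\<lambda>y. S y + indicator {0} y * c0 + indicator {1} y * c1) \<in> borel_measurable borel"
      by measurable
    then have "(\<lambda>y. S y + indicator {0} y * c0 + indicator {1} y * c1) \<in> borel_measurable M01"
      by (rule borel_M01)
    moreover have "\<And>y. y \<in> space M01 \<Longrightarrow> S y + indicator {0} y * c0 + indicator {1} y * c1 = pi_push h y"
      using eq by (auto simp: c0_def c1_def indicator_def)
    ultimately show ?thesis by (rule measurable_cong[THEN iffD1, rotated]) 
  qed
  have ii: "integrable lborel (\<lambda>w. indicator {a<..<b} w * \<bar>h w\<bar>)" for a b :: real
    using integrable_mult_indicator[of "{a<..<b}" lborel "\<lambda>w. \<bar>h w\<bar>"] hi by simp
  have iplus: "integrable lborel (\<lambda>y. indicator {0<..<1} y * \<bar>h (c + y)\<bar>)" for c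
    using integrable_mult_indicator[of "{0<..<1}" lborel "\<lambda>y. \<bar>h (c + y)\<bar>"]
      lborel_shift_integrable[OF integrable_abs[OF hi], of c] by (simp add: add.commute)
  have iminus: "integrable lborel (\<lambda>y. indicator {0<..<1} y * \<bar>h (c - y)\<bar>)" for c
  proof -
    have "integrable lborel (\<lambda>y. \<bar>h (c + (-1) * y)\<bar>)"
      using lborel_integrable_real_affine[OF integrable_abs[OF hi], of "-1" c] by simp
    then show ?thesis using integrable_mult_indicator[of "{0<..<1}" lborel "\<lambda>y. \<bar>h (c - y)\<bar>"] by simp
  qed
  have S'i: "integrable lborel (\<lambda>y. indicator {0<..<1} y * S' y)"
    unfolding S'_def sum_distrib_left distrib_left
    by (intro Bochner_Integration.integrable_sum Bochner_Integration.integrable_add iplus iminus)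
  have S'M: "integrable M01 S'" using S'i L01(2)[OF S'm] by simp
  have Sle: "\<bar>S y\<bar> \<le> S' y" for y
    unfolding S_def S'_def by (rule order.trans[OF sum_abs]) (intro sum_mono abs_triangle_ineq)
  have S'nn: "0 \<le> S' y" for y unfolding S'_def by (intro sum_nonneg) auto
  have SM: "integrable M01 S"
    by (rule Bochner_Integration.integrable_bound[OF S'M borel_M01[OF Sm]])
       (intro AE_I2, use Sle S'nn in simp)
  show "integrable M01 (pi_push h)"
    by (rule integrable_cong_AE_imp[OF SM pm]) (use ae in auto)
  have "(\<integral>y. \<bar>pi_push h y\<bar> \<partial>M01) = (\<integral>y. \<bar>S y\<bar> \<partial>M01)"
    by (rule integral_cong_AE) (use pm borel_M01[OF Sm] ae in auto)
  also have "\<dots> \<le> (\<integral>y. S' y \<partial>M01)"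
    by (rule integral_mono[OF integrable_abs[OF SM] S'M]) (rule Sle)
  also have "\<dots> = (\<integral>y. indicator {0<..<1} y * S' y \<partial>lborel)"
    by (rule L01(1)[OF S'm])
  also have "\<dots> = (\<Sum>i\<in>I. (\<integral>y. indicator {0<..<1} y * \<bar>h (2 * of_int i + y)\<bar> \<partial>lborel)
                   + (\<integral>y. indicator {0<..<1} y * \<bar>h (2 * of_int i - y)\<bar> \<partial>lborel))"
    unfolding S'_def sum_distrib_left distrib_left
    by (subst Bochner_Integration.integral_sum)
       (auto intro!: iplus iminus sum.cong Bochner_Integration.integral_add Bochner_Integration.integrable_add)
  also have "\<dots> = (\<Sum>i\<in>I. (\<integral>w. indicator {2 * real_of_int i<..<2 * real_of_int i + 1} w * \<bar>h w\<bar> \<partial>lborel)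
                   + (\<integral>w. indicator {2 * real_of_int i - 1<..<2 * real_of_int i} w * \<bar>h w\<bar> \<partial>lborel))"
    by (simp add: shift_ind_plus shift_ind_minus)
  also have "\<dots> = (\<integral>w. (\<Sum>i\<in>I. indicator {2 * real_of_int i<..<2 * real_of_int i + 1} w + indicator {2 * real_of_int i - 1<..<2 * real_of_int i} w) * \<bar>h w\<bar> \<partial>lborel)"
    unfolding sum_distrib_right distrib_right
    by (subst Bochner_Integration.integral_sum)
       (auto intro!: ii sum.cong Bochner_Integration.integral_add[symmetric] Bochner_Integration.integrable_add)
  also have "\<dots> \<le> (\<integral>w. \<bar>h w\<bar> \<partial>lborel)"
  proof (rule integral_mono)
    show "integrable lborel (\<lambda>w. (\<Sum>i\<in>I. indicator {2 * real_of_int i<..<2 * real_of_int i + 1} w + indicator {2 * real_of_int i - 1<..<2 * real_of_int i} w) * \<bar>h w\<bar>)"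
      unfolding sum_distrib_right distrib_right
      by (intro Bochner_Integration.integrable_sum Bochner_Integration.integrable_add ii)
    show "integrable lborel (\<lambda>w. \<bar>h w\<bar>)" using hi by auto
    fix w
    show "(\<Sum>i\<in>I. indicator {2 * real_of_int i<..<2 * real_of_int i + 1} w + indicator {2 * real_of_int i - 1<..<2 * real_of_int i} w) * \<bar>h w\<bar> \<le> \<bar>h w\<bar>"
      using ind_sum_le[OF finI, of w] by (simp add: mult_left_le_one_le sum_nonneg)
  qed
  finally show "(\<integral>y. \<bar>pi_push h y\<bar> \<partial>M01) \<le> (\<integral>z. \<bar>h z\<bar> \<partial>lborel)" .
qed




lemma pi_push_lin:
  fixes h1 h2 :: "real \<Rightarrow> real" and a b :: real
  assumes s1: "\<And>z. \<bar>z\<bar> > R \<Longrightarrow> h1 z = 0" and s2: "\<And>z. \<bar>z\<bar> > R \<Longrightarrow> h2 z = 0"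
  shows "AE y in M01. pi_push (\<lambda>z. a * h1 z + b * h2 z) y = a * pi_push h1 y + b * pi_push h2 y"
proof -
  obtain N :: nat where N: "R + 1 \<le> 2 * real N"
    using real_arch_simple[of "(R + 1) / 2"] by (auto simp: field_simps)
  have s3: "\<And>z. \<bar>z\<bar> > R \<Longrightarrow> a * h1 z + b * h2 z = 0" using s1 s2 by simp
  show ?thesis using AE_M01_open
  proof eventually_elim
    case (elim y)
    then show ?case
      using pi_push_eq[OF s1 N, where y=y] pi_push_eq[OF s2 N, where y=y] pi_push_eq[OF s3 N, where y=y]
      by (simp add: sum_distrib_left sum.distrib[symmetric] algebra_simps)
  qed
qed

locale kern =
  fixes \<xi> :: real and \<rho> :: "real \<Rightarrow> real"
  assumes nk: "noise_kernel \<xi> \<rho>"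
begin

lemma \<rho>_borel[measurable]: "\<rho> \<in> borel_measurable borel"
  using nk unfolding noise_kernel_def by auto

lemma \<rho>_int: "integrable lborel \<rho>"
  using nk unfolding noise_kernel_def by auto

lemma \<rho>_supp: "\<bar>x\<bar> > \<xi> / 2 \<Longrightarrow> \<rho> x = 0"
  using nk unfolding noise_kernel_def by auto

lemma \<rho>_bnd: "\<bar>\<rho> x\<bar> \<le> BV_norm \<rho>"
  by (rule kernel_bounded[OF nk])

lemma shift_abs: "(\<integral>z. \<bar>\<rho> (z - c)\<bar> \<partial>lborel) = (\<integral>z. \<bar>\<rho> z\<bar> \<partial>lborel)"
  using lborel_shift[of "\<lambda>z. \<bar>\<rho> z\<bar>" "-c"] by simp

lemma int_shift: "integrable lborel (\<lambda>z. \<rho> (z - c))"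
  using lborel_shift_integrable[OF \<rho>_int, of "-c"] by simp

definition "K = (\<integral>z. \<bar>\<rho> z\<bar> \<partial>lborel)"

lemma K_nonneg: "0 \<le> K" unfolding K_def by simp

lemma integrand_int:
  assumes Tm[measurable]: "T \<in> borel_measurable M01" and gi: "integrable M01 g"
  shows "integrable M01 (\<lambda>x. \<rho> (z - T x) * g x)"
proof (rule Bochner_Integration.integrable_bound[where f="\<lambda>x. BV_norm \<rho> * g x"])
  show "integrable M01 (\<lambda>x. BV_norm \<rho> * g x)" using gi by simp
  have [measurable]: "g \<in> borel_measurable M01" using gi by simp
  show "(\<lambda>x. \<rho> (z - T x) * g x) \<in> borel_measurable M01" by measurable
  show "AE x in M01. norm (\<rho> (z - T x) * g x) \<le> norm (BV_norm \<rho> * g x)"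
    using \<rho>_bnd BV_nonneg[of \<rho>] nk unfolding noise_kernel_def
    by (auto simp: abs_mult intro!: mult_right_mono)
qed

lemma conv_supp:
  assumes T01: "T ` {0..1} \<subseteq> {0..1}" and z: "\<bar>z\<bar> > \<bar>\<xi>\<bar> + 1"
  shows "conv_push T \<rho> g z = 0"
proof -
  have "conv_push T \<rho> g z = (\<integral>x. 0 \<partial>M01)"
    unfolding conv_push_def
  proof (rule Bochner_Integration.integral_cong)
    fix x assume "x \<in> space M01"
    then have "T x \<in> {0..1}" using T01 by (auto simp: image_subset_iff)
    then have "\<bar>z - T x\<bar> > \<bar>\<xi>\<bar>" using z by (cases "z \<ge> 0") auto
    then have "\<bar>z - T x\<bar> > \<xi> / 2" by linarith
    then show "\<rho> (z - T x) * g x = 0" using \<rho>_supp by simp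
  qed simp
  then show ?thesis by simp
qed

lemma conv_int:
  assumes Tm[measurable]: "T \<in> borel_measurable M01" and gi: "integrable M01 g"
  shows "integrable lborel (conv_push T \<rho> g)"
    and "(\<integral>z. \<bar>conv_push T \<rho> g z\<bar> \<partial>lborel) \<le> K * (\<integral>x. \<bar>g x\<bar> \<partial>M01)"
proof -
  have km: "(\<lambda>(x, z). \<rho> (z - T x)) \<in> borel_measurable (M01 \<Otimes>\<^sub>M lborel)"
    by measurable
  have kb: "AE x in M01. (\<integral>z. \<bar>\<rho> (z - T x)\<bar> \<partial>lborel) \<le> K"
    unfolding K_def shift_abs by simp
  note kernel_bound[of "\<lambda>x z. \<rho> (z - T x)", OF km gi int_shift kb]
  then show "integrable lborel (conv_push T \<rho> g)"
    and "(\<integral>z. \<bar>conv_push T \<rho> g z\<bar> \<partial>lborel) \<le> K * (\<integral>x. \<bar>g x\<bar> \<partial>M01)"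
    unfolding conv_push_def by auto
qed


lemma transfer_int:
  assumes Tm[measurable]: "T \<in> borel_measurable M01" and T01: "T ` {0..1} \<subseteq> {0..1}"
    and gi: "integrable M01 g"
  shows "integrable M01 (transfer_op T \<rho> g)"
    and "(\<integral>y. \<bar>transfer_op T \<rho> g y\<bar> \<partial>M01) \<le> K * (\<integral>x. \<bar>g x\<bar> \<partial>M01)"
proof -
  note c = conv_int[OF Tm gi]
  have s: "\<And>z. \<bar>z\<bar> > \<bar>\<xi>\<bar> + 1 \<Longrightarrow> conv_push T \<rho> g z = 0" by (rule conv_supp[OF T01])
  note p = pi_push_L1[where R="\<bar>\<xi>\<bar> + 1", OF c(1) s]
  show "integrable M01 (transfer_op T \<rho> g)" using p(1) unfolding transfer_op_def .
  show "(\<integral>y. \<bar>transfer_op T \<rho> g y\<bar> \<partial>M01) \<le> K * (\<integral>x. \<bar>g x\<bar> \<partial>M01)"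
    using p(2) c(2) unfolding transfer_op_def by linarith
qed

lemma conv_lin:
  assumes Tm[measurable]: "T \<in> borel_measurable M01"
    and g1: "integrable M01 g1" and g2: "integrable M01 g2"
  shows "conv_push T \<rho> (\<lambda>x. a * g1 x + b * g2 x) z = a * conv_push T \<rho> g1 z + b * conv_push T \<rho> g2 z"
proof -
  have "conv_push T \<rho> (\<lambda>x. a * g1 x + b * g2 x) z = (\<integral>x. a * (\<rho> (z - T x) * g1 x) + b * (\<rho> (z - T x) * g2 x) \<partial>M01)"
    unfolding conv_push_def by (simp add: algebra_simps)
  also have "\<dots> = a * conv_push T \<rho> g1 z + b * conv_push T \<rho> g2 z"
    unfolding conv_push_def using integrand_int[OF Tm g1, of z] integrand_int[OF Tm g2, of z]
    by simp
  finally show ?thesis .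
qed

lemma transfer_lin:
  assumes Tm[measurable]: "T \<in> borel_measurable M01" and T01: "T ` {0..1} \<subseteq> {0..1}"
    and g1: "integrable M01 g1" and g2: "integrable M01 g2"
  shows "AE y in M01. transfer_op T \<rho> (\<lambda>x. a * g1 x + b * g2 x) y
           = a * transfer_op T \<rho> g1 y + b * transfer_op T \<rho> g2 y"
proof -
  have "conv_push T \<rho> (\<lambda>x. a * g1 x + b * g2 x) = (\<lambda>z. a * conv_push T \<rho> g1 z + b * conv_push T \<rho> g2 z)"
    using conv_lin[OF Tm g1 g2] by auto
  then show ?thesis unfolding transfer_op_def
    using pi_push_lin[of "\<bar>\<xi>\<bar> + 1" "conv_push T \<rho> g1" "conv_push T \<rho> g2" a b] conv_supp[OF T01]
    by simp
qed

lemma transfer_ae: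
  assumes Tm[measurable]: "T \<in> borel_measurable M01"
    and g1: "integrable M01 g1" and g2: "integrable M01 g2"
    and ae: "AE x in M01. g1 x = g2 x"
  shows "transfer_op T \<rho> g1 = transfer_op T \<rho> g2"
proof -
  have "conv_push T \<rho> g1 = conv_push T \<rho> g2"
  proof
    fix z
    show "conv_push T \<rho> g1 z = conv_push T \<rho> g2 z"
      unfolding conv_push_def
      by (rule integral_cong_AE) (use integrand_int[OF Tm g1, of z] integrand_int[OF Tm g2, of z] ae in auto)
  qed
  then show ?thesis unfolding transfer_op_def by simp
qed

lemma transfer_diff:
  assumes T1m[measurable]: "T1 \<in> borel_measurable M01" and T101: "T1 ` {0..1} \<subseteq> {0..1}"
    and T2m[measurable]: "T2 \<in> borel_measurable M01" and T201: "T2 ` {0..1} \<subseteq> {0..1}"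
    and gi: "integrable M01 g"
    and d: "AE x in M01. \<bar>T1 x - T2 x\<bar> \<le> \<delta>"
  shows "integrable M01 (\<lambda>y. transfer_op T1 \<rho> g y - transfer_op T2 \<rho> g y)"
    and "(\<integral>y. \<bar>transfer_op T1 \<rho> g y - transfer_op T2 \<rho> g y\<bar> \<partial>M01) \<le> BV_norm \<rho> * \<delta> * (\<integral>x. \<bar>g x\<bar> \<partial>M01)"
proof -
  define h where "h z = 1 * conv_push T1 \<rho> g z + (-1) * conv_push T2 \<rho> g z" for z
  have hs: "\<And>z. \<bar>z\<bar> > \<bar>\<xi>\<bar> + 1 \<Longrightarrow> h z = 0" unfolding h_def
    using conv_supp[OF T101] conv_supp[OF T201] by simp
  have hk: "h z = (\<integral>x. (\<rho> (z - T1 x) - \<rho> (z - T2 x)) * g x \<partial>M01)" for z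
    unfolding h_def conv_push_def
    using integrand_int[OF T1m gi, of z] integrand_int[OF T2m gi, of z]
    by (simp add: left_diff_distrib)
  have hi: "integrable lborel h" unfolding h_def
    using conv_int(1)[OF T1m gi] conv_int(1)[OF T2m gi] by simp
  have ae: "AE y in M01. pi_push h y = transfer_op T1 \<rho> g y - transfer_op T2 \<rho> g y"
    using pi_push_lin[of "\<bar>\<xi>\<bar> + 1" "conv_push T1 \<rho> g" "conv_push T2 \<rho> g" 1 "-1"] conv_supp[OF T101] conv_supp[OF T201]
    unfolding transfer_op_def h_def by simp
  note p = pi_push_L1[where R="\<bar>\<xi>\<bar> + 1", OF hi hs]
  have em: "(\<lambda>y. transfer_op T1 \<rho> g y - transfer_op T2 \<rho> g y) \<in> borel_measurable M01"
    using transfer_int(1)[OF T1m T101 gi] transfer_int(1)[OF T2m T201 gi] by measurable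
  show "integrable M01 (\<lambda>y. transfer_op T1 \<rho> g y - transfer_op T2 \<rho> g y)"
    by (rule integrable_cong_AE_imp[OF p(1) em ae])
  have "(\<integral>y. \<bar>transfer_op T1 \<rho> g y - transfer_op T2 \<rho> g y\<bar> \<partial>M01) = (\<integral>y. \<bar>pi_push h y\<bar> \<partial>M01)"
    by (rule integral_cong_AE) (use em p(1) ae in auto)
  also have "\<dots> \<le> (\<integral>z. \<bar>h z\<bar> \<partial>lborel)" by (rule p(2))
  also have "\<dots> \<le> BV_norm \<rho> * \<delta> * (\<integral>x. \<bar>g x\<bar> \<partial>M01)"
  proof -
    have km: "(\<lambda>(x, z). \<rho> (z - T1 x) - \<rho> (z - T2 x)) \<in> borel_measurable (M01 \<Otimes>\<^sub>M lborel)"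
      by measurable
    have ki: "integrable lborel (\<lambda>z. \<rho> (z - T1 x) - \<rho> (z - T2 x))" for x
      using int_shift[of "T1 x"] int_shift[of "T2 x"] by simp
    have kb: "AE x in M01. (\<integral>z. \<bar>\<rho> (z - T1 x) - \<rho> (z - T2 x)\<bar> \<partial>lborel) \<le> BV_norm \<rho> * \<delta>"
      using d
    proof eventually_elim
      case (elim x)
      have "(\<integral>z. \<bar>\<rho> (z - T1 x) - \<rho> (z - T2 x)\<bar> \<partial>lborel)
          = (\<integral>z. \<bar>\<rho> ((z + - T2 x) + (T2 x - T1 x)) - \<rho> (z + - T2 x)\<bar> \<partial>lborel)"
        by simp
      also have "\<dots> = (\<integral>w. \<bar>\<rho> (w + (T2 x - T1 x)) - \<rho> w\<bar> \<partial>lborel)"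
        by (rule lborel_shift)
      also have "\<dots> \<le> \<bar>T2 x - T1 x\<bar> * BV_norm \<rho>" by (rule kernel_shift[OF nk])
      also have "\<dots> \<le> \<delta> * BV_norm \<rho>"
        using elim BV_nonneg[of \<rho>] nk unfolding noise_kernel_def
        by (intro mult_right_mono) (auto simp: abs_minus_commute)
      finally show ?case by (simp add: mult.commute)
    qed
    show ?thesis
      using kernel_bound(2)[of "\<lambda>x z. \<rho> (z - T1 x) - \<rho> (z - T2 x)", OF km gi ki kb]
      unfolding hk by simp
  qed
  finally show "(\<integral>y. \<bar>transfer_op T1 \<rho> g y - transfer_op T2 \<rho> g y\<bar> \<partial>M01) \<le> BV_norm \<rho> * \<delta> * (\<integral>x. \<bar>g x\<bar> \<partial>M01)" .
qed

end




lemma mono_leb_meas: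
  fixes T :: "real \<Rightarrow> real"
  assumes "mono_on P T"
  shows "T \<in> borel_measurable (restrict_space lebesgue P)"
proof (rule borel_measurable_subalgebra[OF _ _ borel_measurable_mono_on_fnc[OF assms]])
  show "sets (restrict_space borel P) \<subseteq> sets (restrict_space lebesgue P)"
    by (rule mono_restrict_space) auto
  show "space (restrict_space borel P) = space (restrict_space lebesgue P)"
    by (simp add: space_restrict_space)
qed

lemma piecewise_meas:
  fixes T :: "real \<Rightarrow> real"
  assumes "piecewise_smooth T"
  shows "T \<in> borel_measurable M01"
proof -
  obtain \<P> :: "real set set" where fin: "finite \<P>" and un: "\<Union>\<P> = {0..1}"
    and pr: "\<And>P. P \<in> \<P> \<Longrightarrow> is_interval P \<and> (mono_on P T \<or> monotone_on P (\<le>) (\<ge>) T)"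
    using assms unfolding piecewise_smooth_def by metis
  have Pleb: "P \<in> sets lebesgue" if "P \<in> \<P>" for P
  proof -
    have "P \<subseteq> {0..1}" using un that by auto
    then have "bounded P" by (meson bounded_closed_interval bounded_subset)
    moreover have "convex P" using pr[OF that] by (simp add: is_interval_convex)
    ultimately show ?thesis using measurable_convex by (auto simp: fmeasurable_def)
  qed
  show ?thesis
  proof (rule measurable_piecewise_restrict[of \<P>])
    show "countable \<P>" using fin by (rule countable_finite)
    show "space M01 \<subseteq> \<Union>\<P>" using un by simp
    fix P assume P: "P \<in> \<P>"
    have sub: "P \<subseteq> {0..1}" using un P by auto
    show "P \<inter> space M01 \<in> sets M01"
      using Pleb[OF P] sub by (simp add: sets_restrict_space_iff Int_absorb2)
    have eq: "restrict_space M01 P = restrict_space lebesgue P"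
      using restrict_restrict_space[of "{0..1}" lebesgue P] Pleb[OF P] sub
      by (simp add: Int_absorb1)
    have "T \<in> borel_measurable (restrict_space lebesgue P)"
      using pr[OF P]
    proof (elim conjE disjE)
      assume "mono_on P T" then show ?thesis by (rule mono_leb_meas)
    next
      assume "monotone_on P (\<le>) (\<ge>) T"
      then have "mono_on P (\<lambda>x. - T x)" by (auto simp: monotone_on_def)
      then have "(\<lambda>x. - T x) \<in> borel_measurable (restrict_space lebesgue P)" by (rule mono_leb_meas)
      then have "(\<lambda>x. - (- T x)) \<in> borel_measurable (restrict_space lebesgue P)" by measurable
      then show ?thesis by simp
    qed
    then show "T \<in> borel_measurable (restrict_space M01 P)" using eq by simp
  qed
qed




lemma L1_triangle:
  fixes u v :: "real \<Rightarrow> real"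
  assumes "integrable M01 u" "integrable M01 v"
  shows "(\<integral>x. \<bar>u x + v x\<bar> \<partial>M01) \<le> (\<integral>x. \<bar>u x\<bar> \<partial>M01) + (\<integral>x. \<bar>v x\<bar> \<partial>M01)"
proof -
  have "(\<integral>x. \<bar>u x + v x\<bar> \<partial>M01) \<le> (\<integral>x. \<bar>u x\<bar> + \<bar>v x\<bar> \<partial>M01)"
    using assms by (intro integral_mono) (auto simp: abs_triangle_ineq)
  then show ?thesis using assms by simp
qed

lemma L1_sum:
  fixes u :: "nat \<Rightarrow> real \<Rightarrow> real"
  assumes "finite A" "\<And>k. k \<in> A \<Longrightarrow> integrable M01 (u k)"
  shows "(\<integral>x. \<bar>\<Sum>k\<in>A. u k x\<bar> \<partial>M01) \<le> (\<Sum>k\<in>A. \<integral>x. \<bar>u k x\<bar> \<partial>M01)"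
  using assms
proof (induction A rule: finite_induct)
  case empty then show ?case by simp
next
  case (insert a A)
  have "(\<integral>x. \<bar>\<Sum>k\<in>insert a A. u k x\<bar> \<partial>M01) = (\<integral>x. \<bar>u a x + (\<Sum>k\<in>A. u k x)\<bar> \<partial>M01)"
    using insert by simp
  also have "\<dots> \<le> (\<integral>x. \<bar>u a x\<bar> \<partial>M01) + (\<integral>x. \<bar>\<Sum>k\<in>A. u k x\<bar> \<partial>M01)"
    using insert by (intro L1_triangle) auto
  also have "\<dots> \<le> (\<integral>x. \<bar>u a x\<bar> \<partial>M01) + (\<Sum>k\<in>A. \<integral>x. \<bar>u k x\<bar> \<partial>M01)"
    using insert by simp
  finally show ?case using insert by simp
qed

locale kernT = kern +
  fixes T :: "real \<Rightarrow> real"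
  assumes Tm[measurable]: "T \<in> borel_measurable M01" and T01: "T ` {0..1} \<subseteq> {0..1}"
begin

abbreviation "L \<equiv> transfer_op T \<rho>"

lemma Ln_int: "integrable M01 u \<Longrightarrow> integrable M01 ((L ^^ n) u)"
  by (induction n) (auto intro: transfer_int(1)[OF Tm T01])

lemma Ln_norm: "integrable M01 u \<Longrightarrow> (\<integral>x. \<bar>(L ^^ n) u x\<bar> \<partial>M01) \<le> K ^ n * (\<integral>x. \<bar>u x\<bar> \<partial>M01)"
proof (induction n)
  case 0 then show ?case by simp
next
  case (Suc n)
  have "(\<integral>x. \<bar>(L ^^ Suc n) u x\<bar> \<partial>M01) \<le> K * (\<integral>x. \<bar>(L ^^ n) u x\<bar> \<partial>M01)"
    using transfer_int(2)[OF Tm T01 Ln_int[OF Suc.prems, of n]] by simp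
  also have "\<dots> \<le> K * (K ^ n * (\<integral>x. \<bar>u x\<bar> \<partial>M01))"
    using Suc K_nonneg by (intro mult_left_mono) auto
  finally show ?case by simp
qed

lemma Ln_ae:
  assumes "integrable M01 u" "integrable M01 v" "AE x in M01. u x = v x"
  shows "AE x in M01. (L ^^ n) u x = (L ^^ n) v x"
proof (induction n)
  case 0 then show ?case using assms by simp
next
  case (Suc n)
  have "L ((L ^^ n) u) = L ((L ^^ n) v)"
    by (rule transfer_ae[OF Tm Ln_int[OF assms(1)] Ln_int[OF assms(2)] Suc])
  then show ?case by simp
qed

lemma Ln_add:
  assumes u: "integrable M01 u" and v: "integrable M01 v"
  shows "AE x in M01. (L ^^ n) (\<lambda>x. u x + v x) x = (L ^^ n) u x + (L ^^ n) v x"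
proof (induction n)
  case 0 then show ?case by simp
next
  case (Suc n)
  have uv: "integrable M01 (\<lambda>x. u x + v x)" using u v by simp
  have "L ((L ^^ n) (\<lambda>x. u x + v x)) = L (\<lambda>x. 1 * (L ^^ n) u x + 1 * (L ^^ n) v x)"
    by (rule transfer_ae[OF Tm Ln_int[OF uv]]) (use Ln_int[OF u, of n] Ln_int[OF v, of n] Suc in auto)
  moreover have "AE y in M01. L (\<lambda>x. 1 * (L ^^ n) u x + 1 * (L ^^ n) v x) y = 1 * L ((L ^^ n) u) y + 1 * L ((L ^^ n) v) y"
    by (rule transfer_lin[OF Tm T01 Ln_int[OF u] Ln_int[OF v]])
  ultimately show ?case by simp
qed

lemma iter:
  assumes g: "integrable M01 g" and e: "integrable M01 e"
    and eq: "AE y in M01. g y = L g y + e y"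
  shows "AE y in M01. g y = (L ^^ n) g y + (\<Sum>k<n. (L ^^ k) e y)"
proof (induction n)
  case 0 then show ?case by simp
next
  case (Suc n)
  have Lg: "integrable M01 (L g)" by (rule transfer_int(1)[OF Tm T01 g])
  have a1: "AE y in M01. (L ^^ n) g y = (L ^^ n) (\<lambda>x. L g x + e x) y"
    by (rule Ln_ae[OF g _ eq]) (use Lg e in simp)
  have a2: "AE y in M01. (L ^^ n) (\<lambda>x. L g x + e x) y = (L ^^ n) (L g) y + (L ^^ n) e y"
    by (rule Ln_add[OF Lg e])
  have a3: "(L ^^ n) (L g) = (L ^^ Suc n) g" by (simp add: funpow_Suc_right del: funpow.simps)
  show ?case using Suc a1 a2
    by eventually_elim (simp add: a3 del: funpow.simps)
qed

end




lemma M01_space_pos: "emeasure M01 (space M01) \<noteq> 0"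
  by (simp add: emeasure_restrict_space space_restrict_space)

lemma Linf_real:
  assumes "Linf_dist T1 T2 < \<infinity>"
  shows "\<exists>\<delta>. Linf_dist T1 T2 = ereal \<delta> \<and> 0 \<le> \<delta> \<and> (AE x in M01. \<bar>T1 x - T2 x\<bar> \<le> \<delta>)"
proof -
  define E where "E = Linf_dist T1 T2"
  have ae: "AE x in M01. ereal \<bar>T1 x - T2 x\<bar> \<le> E"
    unfolding E_def Linf_dist_def by (rule esssup_AE)
  have "AE x in M01. 0 \<le> E"
    using ae by eventually_elim (auto intro: order.trans[rotated])
  then have E0: "0 \<le> E" using M01_space_pos by (simp add: eventually_const_iff ae_filter_eq_bot_iff)
  obtain \<delta> where d: "E = ereal \<delta>" using E0 assms unfolding E_def[symmetric]
    by (cases E) auto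
  show ?thesis
    using ae E0 unfolding E_def[symmetric] d by (intro exI[of _ \<delta>]) auto
qed

theorem theorem36:
  fixes T1 :: "real \<Rightarrow> real" and \<rho>1 :: "real \<Rightarrow> real" and \<xi> :: real
  assumes "T1 ` {0..1} \<subseteq> {0..1}"
    and "piecewise_smooth T1"
    and "noise_kernel \<xi> \<rho>1"
    and "\<exists>i. contracting_on_V (transfer_op T1 \<rho>1) i"
  shows "\<exists>C>0. \<forall>T2 f1 f2.
           T2 ` {0..1} \<subseteq> {0..1}
         \<and> T2 \<in> borel_measurable (lebesgue_on {0..1})
         \<and> Linf_dist T1 T2 < \<infinity>
         \<and> stationary_density T1 \<rho>1 f1
         \<and> stationary_density T2 \<rho>1 f2
         \<longrightarrow> ereal (L1_norm (\<lambda>x. f1 x - f2 x)) \<le> ereal C * Linf_dist T1 T2 * ereal (BV_norm \<rho>1)"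
proof -
  interpret kern \<xi> \<rho>1 by unfold_locales (rule assms(3))
  have T1m: "T1 \<in> borel_measurable M01" by (rule piecewise_meas[OF assms(2)])
  interpret K1: kernT \<xi> \<rho>1 T1 by unfold_locales (fact T1m, fact assms(1))
  from assms(4) obtain i where "contracting_on_V (transfer_op T1 \<rho>1) i" by blast
  then obtain c where c1: "c < 1"
    and contr: "\<And>\<nu>. integrable M01 \<nu> \<Longrightarrow> integral\<^sup>L M01 \<nu> = 0
        \<Longrightarrow> L1_norm ((transfer_op T1 \<rho>1 ^^ i) \<nu>) \<le> c * L1_norm \<nu>"
    unfolding contracting_on_V_def by blast
  define S where "S = (\<Sum>k<i. K ^ k)"
  have S0: "0 \<le> S" unfolding S_def using K_nonneg by (intro sum_nonneg) simp
  define C where "C = S / (1 - c) + 1"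
  have "0 \<le> S / (1 - c)" using S0 c1 by simp
  then have C0: "C > 0" unfolding C_def by linarith
  define V where "V = BV_norm \<rho>1"
  have V0: "0 \<le> V" unfolding V_def using BV_nonneg assms(3) unfolding noise_kernel_def by blast
  show ?thesis
  proof (intro exI[of _ C] conjI allI impI C0)
    fix T2 f1 f2
    assume H: "T2 ` {0..1} \<subseteq> {0..1} \<and> T2 \<in> borel_measurable M01 \<and> Linf_dist T1 T2 < \<infinity>
         \<and> stationary_density T1 \<rho>1 f1 \<and> stationary_density T2 \<rho>1 f2"
    then have T201: "T2 ` {0..1} \<subseteq> {0..1}" and T2m: "T2 \<in> borel_measurable M01"
      and Lf: "Linf_dist T1 T2 < \<infinity>" by auto
    from H have f1i: "integrable M01 f1" and f1s: "AE y in M01. transfer_op T1 \<rho>1 f1 y = f1 y"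
      and f1I: "integral\<^sup>L M01 f1 = 1"
      unfolding stationary_density_def by auto
    from H have f2i: "integrable M01 f2" and f2s: "AE y in M01. transfer_op T2 \<rho>1 f2 y = f2 y"
      and f2I: "integral\<^sup>L M01 f2 = 1" and f2p: "AE x in M01. f2 x \<ge> 0"
      unfolding stationary_density_def by auto
    obtain \<delta> where dE: "Linf_dist T1 T2 = ereal \<delta>" and d0: "0 \<le> \<delta>"
      and dae: "AE x in M01. \<bar>T1 x - T2 x\<bar> \<le> \<delta>"
      using Linf_real[OF Lf] by blast
    have f2n: "(\<integral>x. \<bar>f2 x\<bar> \<partial>M01) = 1"
    proof -
      have "(\<integral>x. \<bar>f2 x\<bar> \<partial>M01) = integral\<^sup>L M01 f2"
        by (rule integral_cong_AE) (use f2i f2p in auto)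
      then show ?thesis using f2I by simp
    qed
    define D where "D x = f1 x - f2 x" for x
    have Di: "integrable M01 D" unfolding D_def using f1i f2i by simp
    have D0: "integral\<^sup>L M01 D = 0" unfolding D_def using f1i f2i f1I f2I by simp
    define e where "e y = transfer_op T1 \<rho>1 f2 y - transfer_op T2 \<rho>1 f2 y" for y
    have ei: "integrable M01 e" unfolding e_def
      by (rule transfer_diff(1)[OF T1m assms(1) T2m T201 f2i dae])
    have en: "(\<integral>y. \<bar>e y\<bar> \<partial>M01) \<le> V * \<delta>"
      using transfer_diff(2)[OF T1m assms(1) T2m T201 f2i dae] f2n unfolding e_def V_def by simp
    have f1eq: "f1 = (\<lambda>x. 1 * D x + 1 * f2 x)" unfolding D_def by auto
    have lin: "AE y in M01. transfer_op T1 \<rho>1 f1 y = 1 * transfer_op T1 \<rho>1 D y + 1 * transfer_op T1 \<rho>1 f2 y"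
      unfolding f1eq by (rule transfer_lin[OF T1m assms(1) Di f2i])
    have Deq: "AE y in M01. D y = transfer_op T1 \<rho>1 D y + e y"
      using lin f1s f2s by eventually_elim (auto simp: D_def e_def)
    have it: "AE y in M01. D y = (transfer_op T1 \<rho>1 ^^ i) D y + (\<Sum>k<i. (transfer_op T1 \<rho>1 ^^ k) e y)"
      by (rule K1.iter[OF Di ei Deq])
    have Lki: "integrable M01 ((transfer_op T1 \<rho>1 ^^ k) u)" if "integrable M01 u" for k u
      by (rule K1.Ln_int[OF that])
    have "L1_norm D = (\<integral>y. \<bar>(transfer_op T1 \<rho>1 ^^ i) D y + (\<Sum>k<i. (transfer_op T1 \<rho>1 ^^ k) e y)\<bar> \<partial>M01)"
      unfolding L1_norm_def
      by (rule integral_cong_AE) (use it Di Lki[OF Di] Lki[OF ei] in auto)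
    also have "\<dots> \<le> (\<integral>y. \<bar>(transfer_op T1 \<rho>1 ^^ i) D y\<bar> \<partial>M01) + (\<integral>y. \<bar>\<Sum>k<i. (transfer_op T1 \<rho>1 ^^ k) e y\<bar> \<partial>M01)"
      by (rule L1_triangle) (use Lki[OF Di] Lki[OF ei] in auto)
    also have "(\<integral>y. \<bar>\<Sum>k<i. (transfer_op T1 \<rho>1 ^^ k) e y\<bar> \<partial>M01) \<le> (\<Sum>k<i. \<integral>y. \<bar>(transfer_op T1 \<rho>1 ^^ k) e y\<bar> \<partial>M01)"
      by (rule L1_sum) (use Lki[OF ei] in auto)
    also have "\<dots> \<le> (\<Sum>k<i. K ^ k * (V * \<delta>))"
    proof (rule sum_mono)
      fix k
      have "(\<integral>y. \<bar>(transfer_op T1 \<rho>1 ^^ k) e y\<bar> \<partial>M01) \<le> K ^ k * (\<integral>y. \<bar>e y\<bar> \<partial>M01)"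
        by (rule K1.Ln_norm[OF ei])
      also have "\<dots> \<le> K ^ k * (V * \<delta>)" using en K_nonneg by (intro mult_left_mono) auto
      finally show "(\<integral>y. \<bar>(transfer_op T1 \<rho>1 ^^ k) e y\<bar> \<partial>M01) \<le> K ^ k * (V * \<delta>)" .
    qed
    also have "\<dots> = S * (V * \<delta>)" unfolding S_def by (simp add: sum_distrib_right)
    finally have "L1_norm D \<le> c * L1_norm D + S * (V * \<delta>)"
      using contr[OF Di D0] unfolding L1_norm_def by linarith
    then have "(1 - c) * L1_norm D \<le> S * (V * \<delta>)" by (simp add: algebra_simps)
    then have "L1_norm D \<le> S * (V * \<delta>) / (1 - c)" using c1 by (simp add: field_simps)
    also have "\<dots> \<le> C * \<delta> * V"
    proof -
      have "S * (V * \<delta>) / (1 - c) = (S / (1 - c)) * (\<delta> * V)" by simp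
      also have "\<dots> \<le> C * (\<delta> * V)" unfolding C_def
        using V0 d0 by (intro mult_right_mono) auto
      finally show ?thesis by simp
    qed
    finally have "L1_norm (\<lambda>x. f1 x - f2 x) \<le> C * \<delta> * V" unfolding D_def .
    then show "ereal (L1_norm (\<lambda>x. f1 x - f2 x)) \<le> ereal C * Linf_dist T1 T2 * ereal (BV_norm \<rho>1)"
      unfolding dE V_def[symmetric] by simp
  qed
qed



end
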